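(* Let $\mathcal{H}$ be a real Hilbert space, $A:\mathcal{H}\rightrightarrows\mathcal{H}$ maximal monotone, $p\geq2$ an integer, and define $\varphi:[0,+\infty)\times\mathcal{H}\to[0,+\infty)$ by $\varphi(\lambda,x)=\lambda^{1/(p-1)}\|x-(I+\lambda A)^{-1}x\|$ for $\lambda>0$ and $\varphi(0,x)=0$. Fix $x\in\mathcal{H}$ with $0\notin Ax$. Then $\lambda\mapsto\varphi(\lambda,x)$ is continuous and strictly increasing on $[0,+\infty)$, $\varphi(0,x)=0$, and $\varphi(\lambda,x)\to+\infty$ as $\lambda\to+\infty$.
   Context: $(I+\lambda A)^{-1}$ is the resolvent of $A$ of index $\lambda>0$. *)

theory Defs
  imports "HOL-Analysis.Analysis"
begin

definition monotone_op :: "('a::real_inner \<Rightarrow> 'a set) \<Rightarrow> bool" where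
  "monotone_op A \<longleftrightarrow> (\<forall>x y u v. u \<in> A x \<longrightarrow> v \<in> A y \<longrightarrow> inner (x - y) (u - v) \<ge> 0)"

definition maximal_monotone :: "('a::real_inner \<Rightarrow> 'a set) \<Rightarrow> bool" where
  "maximal_monotone A \<longleftrightarrow> monotone_op A \<and>
     (\<forall>B. monotone_op B \<and> (\<forall>x. A x \<subseteq> B x) \<longrightarrow> B = A)"

text \<open>Resolvent (I + \<lambda>A)^{-1} x: the point y with x \<in> y + \<lambda> A y,
  i.e. (x - y)/\<lambda> \<in> A y (single-valued for maximal monotone A and \<lambda> > 0).\<close>

definition resolvent :: "('a::real_inner \<Rightarrow> 'a set) \<Rightarrow> real \<Rightarrow> 'a \<Rightarrow> 'a" where
  "resolvent A l x = (THE y. (x - y) /\<^sub>R l \<in> A y)"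

definition phi :: "('a::real_inner \<Rightarrow> 'a set) \<Rightarrow> nat \<Rightarrow> real \<Rightarrow> 'a \<Rightarrow> real" where
  "phi A p l x = (if l > 0 then l powr (1 / (real p - 1)) * norm (x - resolvent A l x) else 0)"

end

theory Submission
  imports Defs
begin
lemma double_sum_mono:
  fixes S :: "('a::real_inner \<times> 'a) set" and v :: "'a \<times> 'a \<Rightarrow> real"
  assumes fin: "finite S" and mono: "\<forall>p\<in>S. \<forall>q\<in>S. inner (fst p - fst q) (snd p - snd q) \<ge> 0"
    and v0: "\<forall>p\<in>S. v p \<ge> 0" and v1: "sum v S = 1"
  shows "inner (\<Sum>p\<in>S. v p *\<^sub>R fst p) (\<Sum>p\<in>S. v p *\<^sub>R snd p) \<le> (\<Sum>p\<in>S. v p * inner (fst p) (snd p))"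
proof -
  let ?T = "\<lambda>p q. v p * v q * inner (fst p - fst q) (snd p - snd q)"
  have "0 \<le> (\<Sum>p\<in>S. \<Sum>q\<in>S. ?T p q)"
    using mono v0 by (intro sum_nonneg) (auto intro!: mult_nonneg_nonneg)
  also have "(\<Sum>p\<in>S. \<Sum>q\<in>S. ?T p q) = 
     (\<Sum>p\<in>S. \<Sum>q\<in>S. v p * v q * inner (fst p) (snd p)) + (\<Sum>p\<in>S. \<Sum>q\<in>S. v p * v q * inner (fst q) (snd q))
     - (\<Sum>p\<in>S. \<Sum>q\<in>S. v p * v q * inner (fst p) (snd q)) - (\<Sum>p\<in>S. \<Sum>q\<in>S. v p * v q * inner (fst q) (snd p))"
    by (simp add: sum_subtractf sum.distrib inner_diff_left inner_diff_right algebra_simps)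
  also have "(\<Sum>p\<in>S. \<Sum>q\<in>S. v p * v q * inner (fst p) (snd p)) = (\<Sum>p\<in>S. v p * inner (fst p) (snd p))"
    by (simp add: sum_distrib_left[symmetric] sum_distrib_right[symmetric] v1 mult.commute mult.left_commute)
  also have "(\<Sum>p\<in>S. \<Sum>q\<in>S. v p * v q * inner (fst q) (snd q)) = (\<Sum>p\<in>S. v p * inner (fst p) (snd p))"
    by (subst sum.swap) (simp add: sum_distrib_left[symmetric] sum_distrib_right[symmetric] v1 mult.commute mult.left_commute)
  also have "(\<Sum>p\<in>S. \<Sum>q\<in>S. v p * v q * inner (fst p) (snd q)) = inner (\<Sum>p\<in>S. v p *\<^sub>R fst p) (\<Sum>p\<in>S. v p *\<^sub>R snd p)"
  proof -
    have "(\<Sum>p\<in>S. \<Sum>q\<in>S. v p * v q * inner (fst p) (snd q)) = (\<Sum>q\<in>S. \<Sum>p\<in>S. v q * v p * inner (fst p) (snd q))"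
      using sum.swap[of "\<lambda>p q. v p * v q * inner (fst p) (snd q)" S S] by (simp add: ac_simps)
    also have "\<dots> = inner (\<Sum>p\<in>S. v p *\<^sub>R fst p) (\<Sum>p\<in>S. v p *\<^sub>R snd p)"
      by (simp add: inner_sum_left inner_sum_right sum_distrib_left mult.assoc)
    finally show ?thesis .
  qed
  also have "(\<Sum>p\<in>S. \<Sum>q\<in>S. v p * v q * inner (fst q) (snd p)) = inner (\<Sum>p\<in>S. v p *\<^sub>R fst p) (\<Sum>p\<in>S. v p *\<^sub>R snd p)"
    by (simp add: inner_sum_left inner_sum_right sum_distrib_left mult.assoc)
  finally show ?thesis by simp
qed

lemma finite_minty:
  fixes S :: "('a::real_inner \<times> 'a) set"
  assumes fin: "finite S" and mono: "\<forall>p\<in>S. \<forall>q\<in>S. inner (fst p - fst q) (snd p - snd q) \<ge> 0"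
  shows "\<exists>x. \<forall>p\<in>S. inner (x - fst p) (x + snd p) \<le> 0"
proof (cases "S = {}")
  case True thus ?thesis by auto
next
  case False
  define f where "f p = (fst p, snd p, inner (fst p) (snd p))" for p :: "'a \<times> 'a"
  define P where "P = f ` S"
  define h where "h z = - inner (fst (snd z) - fst z) (fst (snd z) - fst z) / 4 - snd (snd z)" for z :: "'a \<times> 'a \<times> real"
  have finP: "finite P" using fin by (simp add: P_def)
  have injf: "inj_on f S" by (auto simp: inj_on_def f_def prod_eq_iff)
  have cpt: "compact (convex hull P)" by (rule finite_imp_compact_convex_hull[OF finP])
  have ne: "convex hull P \<noteq> {}" using False by (simp add: P_def)
  have cont: "continuous_on (convex hull P) h" unfolding h_def by (intro continuous_intros) auto
  obtain z where zC: "z \<in> convex hull P" and zmax: "\<forall>w\<in>convex hull P. h w \<le> h z"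
    using continuous_attains_sup[OF cpt ne cont] by blast
  obtain A B E where zABE: "z = (A, B, E)" by (cases z) auto
  have hz: "h z \<le> 0"
  proof -
    from zC obtain u where u0: "\<forall>q\<in>P. 0 \<le> u q" and u1: "sum u P = 1" and us: "(\<Sum>q\<in>P. u q *\<^sub>R q) = z"
      using convex_hull_finite[OF finP] by auto
    define v where "v p = u (f p)" for p
    have v0: "\<forall>p\<in>S. v p \<ge> 0" using u0 by (auto simp: v_def P_def)
    have v1: "sum v S = 1" using u1 sum.reindex[OF injf, of u] by (simp add: v_def P_def comp_def)
    have zs: "z = (\<Sum>p\<in>S. v p *\<^sub>R f p)" using us sum.reindex[OF injf, of "\<lambda>q. u q *\<^sub>R q"] by (simp add: v_def P_def comp_def)
    have A: "A = (\<Sum>p\<in>S. v p *\<^sub>R fst p)" using arg_cong[OF zs, of fst] by (simp add: zABE fst_sum f_def)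
    have B: "B = (\<Sum>p\<in>S. v p *\<^sub>R snd p)" using arg_cong[OF zs, of "\<lambda>z. fst (snd z)"] by (simp add: zABE fst_sum snd_sum f_def)
    have E: "E = (\<Sum>p\<in>S. v p * inner (fst p) (snd p))" using arg_cong[OF zs, of "\<lambda>z. snd (snd z)"] by (simp add: zABE snd_sum f_def)
    have ineq: "inner A B \<le> E" using double_sum_mono[OF fin mono v0 v1] A B E by simp
    have "h z = - inner (B - A) (B - A)/4 - E" by (simp add: h_def zABE)
    also have "\<dots> \<le> - inner (B - A) (B - A)/4 - inner A B" using ineq by simp
    also have "\<dots> = - inner (A + B) (A + B) / 4" by (simp add: inner_simps inner_commute field_simps)
    also have "\<dots> \<le> 0" by simp
    finally show ?thesis .
  qed
  define x where "x = (1/2) *\<^sub>R (A - B)"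
  show ?thesis
  proof (intro exI ballI)
    fix p assume pS: "p \<in> S"
    obtain a b where p: "p = (a,b)" by (cases p)
    define e where "e = inner a b"
    have qC: "(a, b, e) \<in> convex hull P" proof (rule hull_inc)
      show "(a, b, e) \<in> P" using pS unfolding P_def f_def p e_def by (rule rev_image_eqI) simp
    qed
    define L where "L = - inner (B - A) ((b - B) - (a - A)) / 2 - (e - E)"
    define c where "c = inner ((b - B) - (a - A)) ((b - B) - (a - A)) / 4"
    have quad: "h ((1 - t) *\<^sub>R z + t *\<^sub>R (a,b,e)) = h z + t * L - t^2 * c" for t
      by (simp add: h_def zABE L_def c_def inner_simps inner_commute power2_eq_square field_simps)
    have Lt: "L \<le> t * c" if "0 < t" "t \<le> 1" for t
    proof -
      have "(1 - t) *\<^sub>R z + t *\<^sub>R (a,b,e) \<in> convex hull P"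
        using convexD[OF convex_convex_hull zC qC, of "1 - t" t] that by simp
      then have "h ((1 - t) *\<^sub>R z + t *\<^sub>R (a,b,e)) \<le> h z" using zmax by blast
      then have "t * L \<le> t * (t * c)" using quad by (simp add: power2_eq_square)
      then show ?thesis using that by simp
    qed
    have c0: "c \<ge> 0" by (simp add: c_def)
    have L0: "L \<le> 0"
    proof (rule ccontr)
      assume nL: "\<not> L \<le> 0"
      define t where "t = min 1 (L / (2*c + 1))"
      have t0: "0 < t" "t \<le> 1" using nL c0 by (auto simp: t_def)
      have "L \<le> t * c" by (rule Lt[OF t0])
      also have "\<dots> \<le> L / (2*c + 1) * c" using c0 by (intro mult_right_mono) (auto simp: t_def)
      finally have "L * (2*c+1) \<le> L * c" using c0 by (simp add: field_simps)
      then show False using nL c0 by (smt (verit) mult_le_cancel_left_pos)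
    qed
    have "inner (x - a) (x + b) - h z = L" by (simp add: x_def L_def h_def zABE e_def inner_simps inner_commute field_simps)
    then show "inner (x - fst p) (x + snd p) \<le> 0" using L0 hz p by simp
  qed
qed

lemma inv_lim: "(\<lambda>n. 1 / (real n + 1)) \<longlonglongrightarrow> 0"
proof -
  have "(\<lambda>n. 1 / real (Suc n)) \<longlonglongrightarrow> 0" using LIMSEQ_inverse_real_of_nat by (simp add: inverse_eq_divide del: of_nat_Suc)
  moreover have "(\<lambda>n. 1 / real (Suc n)) = (\<lambda>n. 1 / (real n + 1))" by (simp add: add.commute)
  ultimately show ?thesis by simp
qed

lemma parallelogram_mid:
  fixes x y :: "'a::real_inner"
  shows "norm (x - y)^2 = 2 * norm x ^2 + 2 * norm y ^2 - 4 * norm ((1/2) *\<^sub>R (x + y))^2"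
  by (simp add: power2_norm_eq_inner inner_simps inner_commute field_simps)

lemma min_norm_exists:
  fixes K :: "'a::{real_inner,complete_space} set"
  assumes ne: "K \<noteq> {}" and cl: "closed K" and mid: "\<And>x y. x\<in>K \<Longrightarrow> y\<in>K \<Longrightarrow> (1/2) *\<^sub>R (x + y) \<in> K"
  shows "\<exists>m\<in>K. \<forall>z\<in>K. norm m \<le> norm z"
proof -
  define d where "d = Inf (norm ` K)"
  have bdd: "bdd_below (norm ` K)" by (rule bdd_belowI[of _ 0]) auto
  have dle: "d \<le> norm z" if "z \<in> K" for z unfolding d_def using bdd that by (auto intro: cInf_lower)
  have d0: "0 \<le> d" unfolding d_def using ne by (intro cInf_greatest) auto
  have "\<exists>x\<in>K. norm x ^ 2 < d^2 + 1 / (real n + 1)" for n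
  proof -
    have "d < sqrt (d^2 + 1 / (real n + 1))"
      using d0 by (smt (verit) divide_pos_pos of_nat_less_0_iff real_less_rsqrt)
    then obtain x where "x \<in> K" "norm x < sqrt (d^2 + 1 / (real n + 1))"
      using cInf_lessD[of "norm ` K"] ne unfolding d_def by auto
    moreover then have "norm x ^ 2 < d^2 + 1 / (real n + 1)"
      by (smt (verit) norm_ge_zero power_strict_mono real_sqrt_pow2 zero_le_power2 divide_nonneg_nonneg of_nat_0_le_iff zero_less_numeral)
    ultimately show ?thesis by blast
  qed
  then obtain X where XK: "\<And>n. X n \<in> K" and Xn: "\<And>n. norm (X n) ^ 2 < d^2 + 1 / (real n + 1)"
    by metis
  have dist: "norm (X m - X n) ^ 2 < 2 / (real m + 1) + 2 / (real n + 1)" for m n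
  proof -
    have "d \<le> norm ((1/2) *\<^sub>R (X m + X n))" using dle mid XK by blast
    then have "d^2 \<le> norm ((1/2) *\<^sub>R (X m + X n))^2" using d0 by (simp add: power_mono)
    then show ?thesis using parallelogram_mid[of "X m" "X n"] Xn[of m] Xn[of n] by linarith
  qed
  have "Cauchy X"
  proof (rule CauchyI)
    fix e :: real assume e: "0 < e"
    obtain M :: nat where M: "4 / e^2 < real M" using reals_Archimedean2 by blast
    have "4 / (real M + 1) < e^2" using M e by (simp add: field_simps) (smt (verit) zero_less_power)
    show "\<exists>M. \<forall>m\<ge>M. \<forall>n\<ge>M. norm (X m - X n) < e"
    proof (intro exI allI impI)
      fix m n assume mn: "M \<le> m" "M \<le> n"
      have "2 / (real m + 1) \<le> 2 / (real M + 1)" "2 / (real n + 1) \<le> 2 / (real M + 1)"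
        using mn by (simp_all add: frac_le)
      then have "norm (X m - X n) ^ 2 < e^2" using dist[of m n] \<open>4 / (real M + 1) < e^2\<close> by linarith
      then show "norm (X m - X n) < e" using e by (simp add: power_less_imp_less_base)
    qed
  qed
  then obtain m where lim: "X \<longlonglongrightarrow> m" using Cauchy_convergent_iff convergent_def by blast
  have mK: "m \<in> K" by (rule closed_sequentially[OF cl _ lim]) (simp add: XK)
  have l1: "(\<lambda>n. norm (X n) ^ 2) \<longlonglongrightarrow> norm m ^ 2" by (intro tendsto_intros lim)
  have l2: "(\<lambda>n. d^2 + 1 / (real n + 1)) \<longlonglongrightarrow> d^2 + 0"
    by (intro tendsto_intros inv_lim)
  have "norm m ^ 2 \<le> d^2 + 0"
    by (rule tendsto_le[OF sequentially_bot l2 l1]) (simp add: less_imp_le[OF Xn])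
  then have "norm m ^ 2 \<le> d^2" by simp
  then have "norm m \<le> d" using d0 by (rule power2_le_imp_le)
  show ?thesis
  proof (intro bexI[OF _ mK] ballI)
    fix z assume "z \<in> K"
    show "norm m \<le> norm z" using dle[OF \<open>z \<in> K\<close>] \<open>norm m \<le> d\<close> by (rule order_trans[rotated])
  qed
qed

lemma min_norm_ineq:
  fixes K :: "'a::real_inner set"
  assumes mid: "\<And>x y. x\<in>K \<Longrightarrow> y\<in>K \<Longrightarrow> (1/2) *\<^sub>R (x + y) \<in> K"
    and mK: "m \<in> K" and mmin: "\<forall>z\<in>K. norm m \<le> norm z" and zK: "z \<in> K"
  shows "norm (z - m)^2 \<le> 2 * (norm z ^ 2 - norm m ^ 2)"
proof -
  have "norm m \<le> norm ((1/2) *\<^sub>R (z + m))" using mid[OF zK mK] mmin by blast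
  then have "norm m ^ 2 \<le> norm ((1/2) *\<^sub>R (z + m)) ^ 2" by (simp add: power_mono)
  moreover have "norm (z - m)^2 = 2 * norm z ^2 + 2 * norm m ^2 - 4 * norm ((1/2) *\<^sub>R (z + m))^2"
    by (rule parallelogram_mid)
  ultimately show ?thesis by (smt (verit))
qed

lemma minty_core:
  fixes G :: "('a::{real_inner,complete_space} \<times> 'a) set" and y :: 'a
  assumes mono: "\<forall>p\<in>G. \<forall>q\<in>G. inner (fst p - fst q) (snd p - snd q) \<ge> 0"
  shows "\<exists>x. \<forall>p\<in>G. inner (x - fst p) (x + snd p - y) \<le> 0"
proof (cases "G = {}")
  case True then show ?thesis by auto
next
  case False
  then obtain p0 where p0: "p0 \<in> G" by blast
  define Kf where "Kf S = {x. \<forall>p\<in>S. inner (x - fst p) (x + snd p - y) \<le> 0}" for S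
  define FS where "FS = {S. finite S \<and> S \<subseteq> G}"
  have Kf_ne: "Kf S \<noteq> {}" if "S \<in> FS" for S
  proof -
    define S' where "S' = (\<lambda>p. (fst p, snd p - y)) ` S"
    have "finite S'" using that by (simp add: S'_def FS_def)
    moreover have "\<forall>p\<in>S'. \<forall>q\<in>S'. inner (fst p - fst q) (snd p - snd q) \<ge> 0"
      using mono that by (auto simp: S'_def FS_def)
    ultimately obtain x where "\<forall>p\<in>S'. inner (x - fst p) (x + snd p) \<le> 0"
      using finite_minty by blast
    then have "x \<in> Kf S" by (auto simp: Kf_def S'_def algebra_simps)
    then show ?thesis by blast
  qed
  have Kf_closed: "closed (Kf S)" for S
  proof -
    have "Kf S = (\<Inter>p\<in>S. {x. inner (x - fst p) (x + snd p - y) \<le> 0})" by (auto simp: Kf_def)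
    moreover have "closed {x. inner (x - fst p) (x + snd p - y) \<le> 0}" for p
      by (intro closed_Collect_le continuous_intros)
    ultimately show ?thesis by auto
  qed
  have mid_id: "inner ((1/2) *\<^sub>R (x + z) - a) ((1/2) *\<^sub>R (x + z) + b) =
     (inner (x - a) (x + b) + inner (z - a) (z + b)) / 2 - inner (x - z) (x - z) / 4" for x z a b :: 'a
    by (simp add: inner_simps inner_commute field_simps)
  have Kf_mid: "(1/2) *\<^sub>R (x + z) \<in> Kf S" if "x \<in> Kf S" "z \<in> Kf S" for x z S
  proof -
    have "inner ((1/2) *\<^sub>R (x + z) - fst p) ((1/2) *\<^sub>R (x + z) + (snd p - y)) \<le> 0" if "p \<in> S" for p
    proof -
      have "inner (x - fst p) (x + (snd p - y)) \<le> 0" "inner (z - fst p) (z + (snd p - y)) \<le> 0"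
        using \<open>x \<in> Kf S\<close> \<open>z \<in> Kf S\<close> \<open>p \<in> S\<close> by (auto simp: Kf_def algebra_simps)
      moreover have "inner (x - z) (x - z) \<ge> 0" by simp
      moreover have "\<And>X Y W::real. X \<le> 0 \<Longrightarrow> Y \<le> 0 \<Longrightarrow> 0 \<le> W \<Longrightarrow> (X+Y)/2 - W/4 \<le> 0" by (simp add: field_simps)
      ultimately show ?thesis unfolding mid_id by blast
    qed
    then show ?thesis by (auto simp: Kf_def algebra_simps)
  qed
  have Kf_anti: "Kf T \<subseteq> Kf S" if "S \<subseteq> T" for S T using that by (auto simp: Kf_def)
  define mn where "mn S = (SOME m. m \<in> Kf S \<and> (\<forall>z\<in>Kf S. norm m \<le> norm z))" for S
  have mn_prop: "mn S \<in> Kf S \<and> (\<forall>z\<in>Kf S. norm (mn S) \<le> norm z)" if "S \<in> FS" for S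
  proof -
    have "\<exists>m\<in>Kf S. \<forall>z\<in>Kf S. norm m \<le> norm z"
      by (rule min_norm_exists[OF Kf_ne[OF that] Kf_closed Kf_mid])
    then obtain m where "m \<in> Kf S \<and> (\<forall>z\<in>Kf S. norm m \<le> norm z)" by blast
    then show ?thesis unfolding mn_def by (rule someI)
  qed
  have mn_le: "norm (mn S) \<le> norm (mn T)" if "S \<in> FS" "T \<in> FS" "S \<subseteq> T" for S T
    using mn_prop[OF that(1)] mn_prop[OF that(2)] Kf_anti[OF that(3)] by blast
  have mn_ineq: "norm (mn T - mn S)^2 \<le> 2 * (norm (mn T)^2 - norm (mn S)^2)" if "S \<in> FS" "T \<in> FS" "S \<subseteq> T" for S T
  proof -
    have "mn T \<in> Kf S" using mn_prop[OF that(2)] Kf_anti[OF that(3)] by blast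
    moreover have "mn S \<in> Kf S" "\<forall>z\<in>Kf S. norm (mn S) \<le> norm z" using mn_prop[OF that(1)] by blast+
    ultimately show ?thesis using min_norm_ineq[of "Kf S" "mn S" "mn T"] Kf_mid by blast
  qed
  obtain R where R: "\<And>x. x \<in> Kf {p0} \<Longrightarrow> norm x \<le> R"
  proof -
    define c1 where "c1 = norm (fst p0 - snd p0 + y)"
    define c2 where "c2 = \<bar>inner (fst p0) (snd p0 - y)\<bar>"
    have "norm x \<le> 1 + c1 + c2" if "x \<in> Kf {p0}" for x
    proof -
      have "inner (x - fst p0) (x + snd p0 - y) \<le> 0" using that by (simp add: Kf_def)
      moreover have "inner (x - fst p0) (x + snd p0 - y) = norm x ^ 2 - inner x (fst p0 - snd p0 + y) - inner (fst p0) (snd p0 - y)"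
        by (simp add: inner_simps inner_commute power2_norm_eq_inner algebra_simps)
      moreover have "inner x (fst p0 - snd p0 + y) \<le> norm x * c1" unfolding c1_def by (rule norm_cauchy_schwarz)
      moreover have "- inner (fst p0) (snd p0 - y) \<ge> - c2" unfolding c2_def by simp
      ultimately have *: "norm x ^ 2 \<le> norm x * c1 + c2" by linarith
      show ?thesis
      proof (rule ccontr)
        assume "\<not> ?thesis"
        then have n: "norm x > 1 + c1 + c2" by simp
        have c0: "c1 \<ge> 0" "c2 \<ge> 0" by (simp_all add: c1_def c2_def)
        have "norm x * (1 + c1 + c2) < norm x * norm x" using n c0 by (intro mult_strict_left_mono) auto
        moreover have "c2 * 1 \<le> c2 * norm x" using n c0 by (intro mult_left_mono) auto
        ultimately have "norm x * c1 + c2 < norm x * norm x" using c0 n by (simp add: algebra_simps)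
        then show False using * by (simp add: power2_eq_square)
      qed
    qed
    then show ?thesis using that by blast
  qed
  have FS_p0: "insert p0 S \<in> FS" if "S \<in> FS" for S using that p0 by (auto simp: FS_def)
  have mn_bd: "norm (mn S) \<le> R" if "S \<in> FS" for S
  proof -
    have "norm (mn S) \<le> norm (mn (insert p0 S))" using mn_le[OF that FS_p0[OF that]] by blast
    also have "\<dots> \<le> R" using R mn_prop[OF FS_p0[OF that]] Kf_anti[of "{p0}" "insert p0 S"] by blast
    finally show ?thesis .
  qed
  have FSne: "{} \<in> FS" by (simp add: FS_def)
  define r where "r = (SUP S\<in>FS. norm (mn S))"
  have bdd: "bdd_above ((\<lambda>S. norm (mn S)) ` FS)" using mn_bd by (intro bdd_aboveI2) 
  have r_ge: "norm (mn S) \<le> r" if "S \<in> FS" for S unfolding r_def using bdd that by (rule cSUP_upper2) simp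
  have r0: "r \<ge> 0" using order_trans[OF norm_ge_zero r_ge[OF FSne]] .
  have "\<exists>S\<in>FS. r - 1 / (real n + 1) < norm (mn S)" for n
  proof -
    have "r - 1 / (real n + 1) < r" by simp
    then have "r - 1 / (real n + 1) < (SUP S\<in>FS. norm (mn S))" unfolding r_def .
    moreover have "FS \<noteq> {}" using FSne by blast
    ultimately show ?thesis by (subst (asm) less_cSUP_iff[OF _ bdd])
  qed
  then obtain Sq where Sq: "\<And>n. Sq n \<in> FS" "\<And>n. r - 1 / (real n + 1) < norm (mn (Sq n))" by metis
  define T where "T n = (\<Union>k\<le>n. Sq k)" for n
  have T_FS: "T n \<in> FS" for n using Sq(1) by (auto simp: T_def FS_def)
  have T_mono: "T n \<subseteq> T k" if "n \<le> k" for n k unfolding T_def using that by (intro UN_mono) auto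
  have T_big: "r - 1 / (real n + 1) < norm (mn (T n))" for n
  proof -
    have "Sq n \<subseteq> T n" unfolding T_def by blast
    then have "norm (mn (Sq n)) \<le> norm (mn (T n))" by (rule mn_le[OF Sq(1) T_FS])
    then show ?thesis using Sq(2)[of n] by linarith
  qed
  have key: "norm (mn S - mn (T n))^2 \<le> 4 * r / (real n + 1)" if "S \<in> FS" "T n \<subseteq> S" for S n
  proof -
    let ?s = "norm (mn S)" and ?t = "norm (mn (T n))"
    have st: "?t \<le> ?s" using mn_le[OF T_FS that(1) that(2)] .
    have sr: "?s \<le> r" using r_ge[OF that(1)] .
    have ts: "?s - ?t \<le> 1 / (real n + 1)" using T_big[of n] sr by linarith
    have "?s^2 - ?t^2 = (?s - ?t) * (?s + ?t)" by (simp add: power2_eq_square algebra_simps)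
    also have "\<dots> \<le> (1 / (real n + 1)) * (2 * r)"
      using ts st sr by (intro mult_mono) auto
    finally have "?s^2 - ?t^2 \<le> 2 * (r / (real n + 1))" by simp
    then have "norm (mn S - mn (T n))^2 \<le> 4 * (r / (real n + 1))" using mn_ineq[OF T_FS that(1) that(2)] by (smt (verit))
    then show ?thesis by simp
  qed
  define X where "X n = mn (T n)" for n
  have "Cauchy X"
  proof (rule CauchyI)
    fix e :: real assume e: "0 < e"
    obtain N :: nat where N: "16 * r / e^2 < real N" using reals_Archimedean2 by blast
    have Ne: "4 * r / (real N + 1) < (e/2)^2"
    proof -
      have "16 * r < real N * e^2" using N e by (simp add: divide_less_eq)
      also have "\<dots> < (real N + 1) * e^2" using e by (simp add: distrib_right)
      finally have h: "16 * r < (real N + 1) * e^2" .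
      have pos: "0 < real N + 1" by simp
      show ?thesis using h pos by (simp add: divide_less_eq power_divide mult.commute)
    qed
    have close: "norm (X m - X N) < e/2" if "N \<le> m" for m
    proof -
      have "norm (X m - X N)^2 < (e/2)^2" using key[OF T_FS T_mono[OF that]] Ne by (simp add: X_def)
      then show ?thesis by (rule power_less_imp_less_base) (use e in simp)
    qed
    show "\<exists>M. \<forall>m\<ge>M. \<forall>n\<ge>M. norm (X m - X n) < e"
    proof (intro exI allI impI)
      fix m n assume "N \<le> m" "N \<le> n"
      then have "norm (X m - X N) < e/2" "norm (X n - X N) < e/2" using close by auto
      moreover have "norm (X m - X n) \<le> norm (X m - X N) + norm (X n - X N)"
        by (metis norm_diff_triangle_le norm_minus_commute order_refl)
      ultimately show "norm (X m - X n) < e" by linarith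
    qed
  qed
  then obtain x0 where x0: "X \<longlonglongrightarrow> x0" using Cauchy_convergent_iff convergent_def by blast
  have lim0: "(\<lambda>n. sqrt (4 * r / (real n + 1))) \<longlonglongrightarrow> 0"
  proof -
    have "(\<lambda>n. sqrt (4 * r * (1 / (real n + 1)))) \<longlonglongrightarrow> sqrt (4 * r * 0)" by (intro tendsto_intros inv_lim)
    then show ?thesis by simp
  qed
  show ?thesis
  proof (intro exI ballI)
    fix p assume pG: "p \<in> G"
    define Y where "Y n = mn (insert p (T n))" for n
    have YFS: "insert p (T n) \<in> FS" for n using T_FS pG by (auto simp: FS_def)
    have "(\<lambda>n. Y n - X n) \<longlonglongrightarrow> 0"
    proof (rule Lim_null_comparison[OF _ lim0])
      show "\<forall>\<^sub>F n in sequentially. norm (Y n - X n) \<le> sqrt (4 * r / (real n + 1))"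
      proof (intro always_eventually allI)
        fix n
        have "T n \<subseteq> insert p (T n)" by blast
        then have "norm (Y n - X n)^2 \<le> 4 * r / (real n + 1)" using key[OF YFS] by (simp add: X_def Y_def)
        then show "norm (Y n - X n) \<le> sqrt (4 * r / (real n + 1))" by (rule real_le_rsqrt)
      qed
    qed
    then have "(\<lambda>n. (Y n - X n) + X n) \<longlonglongrightarrow> 0 + x0" by (intro tendsto_intros x0)
    then have Ylim: "Y \<longlonglongrightarrow> x0" by simp
    have "(\<lambda>n. inner (Y n - fst p) (Y n + snd p - y)) \<longlonglongrightarrow> inner (x0 - fst p) (x0 + snd p - y)"
      by (intro tendsto_intros Ylim)
    moreover have "inner (Y n - fst p) (Y n + snd p - y) \<le> 0" for n
      using mn_prop[OF YFS[of n]] by (auto simp: Y_def Kf_def)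
    ultimately show "inner (x0 - fst p) (x0 + snd p - y) \<le> 0"
      by (intro LIMSEQ_le_const2) auto
  qed
qed

lemma resolvent_char:
  fixes A :: "'a::{real_inner, complete_space} \<Rightarrow> 'a set"
  assumes mm: "maximal_monotone A" and l: "l > 0"
  shows "(x - resolvent A l x) /\<^sub>R l \<in> A (resolvent A l x)"
proof -
  have monoA: "monotone_op A" using mm by (simp add: maximal_monotone_def)
  define G where "G = {(a, l *\<^sub>R b) | a b. b \<in> A a}"
  have "\<forall>p\<in>G. \<forall>q\<in>G. inner (fst p - fst q) (snd p - snd q) \<ge> 0"
  proof (intro ballI)
    fix p q assume "p \<in> G" "q \<in> G"
    then obtain a b a' b' where "p = (a, l *\<^sub>R b)" "b \<in> A a" "q = (a', l *\<^sub>R b')" "b' \<in> A a'"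
      by (auto simp: G_def)
    moreover then have "inner (a - a') (b - b') \<ge> 0" using monoA by (simp add: monotone_op_def)
    ultimately show "inner (fst p - fst q) (snd p - snd q) \<ge> 0"
      using l by (simp add: scaleR_diff_right[symmetric])
  qed
  then obtain x0 where x0: "\<forall>p\<in>G. inner (x0 - fst p) (x0 + snd p - x) \<le> 0"
    using minty_core by blast
  define u0 where "u0 = (x - x0) /\<^sub>R l"
  have rel: "inner (x0 - a) (u0 - b) \<ge> 0" if "b \<in> A a" for a b
  proof -
    have "(a, l *\<^sub>R b) \<in> G" using that by (auto simp: G_def)
    then have "inner (x0 - a) (x0 + l *\<^sub>R b - x) \<le> 0" using x0 by auto
    moreover have "u0 - b = (- 1 / l) *\<^sub>R (x0 + l *\<^sub>R b - x)"
      using l by (simp add: u0_def algebra_simps divide_inverse)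
    ultimately show ?thesis using l by (simp add: inner_scaleR_right divide_nonpos_pos)
  qed
  define B where "B z = A z \<union> (if z = x0 then {u0} else {})" for z
  have "monotone_op B"
    unfolding monotone_op_def
  proof (intro allI impI)
    fix y z u v assume u: "u \<in> B y" and v: "v \<in> B z"
    show "inner (y - z) (u - v) \<ge> 0"
    proof (cases "u \<in> A y")
      case True
      show ?thesis
      proof (cases "v \<in> A z")
        case True
        then show ?thesis using \<open>u \<in> A y\<close> monoA by (simp add: monotone_op_def)
      next
        case False
        then have "z = x0" "v = u0" using v by (auto simp: B_def split: if_splits)
        then show ?thesis using rel[OF \<open>u \<in> A y\<close>]
          by (metis inner_minus_left inner_minus_right minus_diff_eq minus_minus)
      qed
    next
      case False
      then have yu: "y = x0" "u = u0" using u by (auto simp: B_def split: if_splits)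
      show ?thesis
      proof (cases "v \<in> A z")
        case True
        then show ?thesis using rel[OF True] yu by simp
      next
        case False
        then have "z = x0" "v = u0" using v by (auto simp: B_def split: if_splits)
        then show ?thesis using yu by simp
      qed
    qed
  qed
  moreover have "\<forall>z. A z \<subseteq> B z" by (auto simp: B_def)
  ultimately have "B = A" using mm by (simp add: maximal_monotone_def)
  then have ex: "(x - x0) /\<^sub>R l \<in> A x0" by (metis B_def UnI2 singletonI u0_def)
  have uniq: "y = x0" if "(x - y) /\<^sub>R l \<in> A y" for y
  proof -
    have "inner (y - x0) ((x - y) /\<^sub>R l - (x - x0) /\<^sub>R l) \<ge> 0"
      using monoA that ex by (simp add: monotone_op_def)
    moreover have "(x - y) /\<^sub>R l - (x - x0) /\<^sub>R l = (- 1 / l) *\<^sub>R (y - x0)"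
      by (simp add: algebra_simps divide_inverse)
    ultimately have "inner (y - x0) (y - x0) \<le> 0" using l by (simp add: divide_le_0_iff)
    then have "inner (y - x0) (y - x0) = 0" by (intro antisym) simp_all
    then show ?thesis by simp
  qed
  have "resolvent A l x = x0" unfolding resolvent_def
    by (rule the_equality[where P="\<lambda>y. (x - y) /\<^sub>R l \<in> A y", OF ex uniq])
  then show ?thesis using ex by simp
qed

lemma real_powr_at_top':
  assumes "(p::real) > 0"
  shows   "filterlim (\<lambda>x. x powr p) at_top at_top"
proof (subst filterlim_cong[OF refl refl])
  show "LIM x at_top. exp (p * ln x) :> at_top"
    by (rule filterlim_compose[OF exp_at_top filterlim_tendsto_pos_mult_at_top[OF tendsto_const]])
       (simp_all add: ln_at_top assms)
  show "eventually (\<lambda>x. x powr p = exp (p * ln x)) at_top"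
    using eventually_gt_at_top[of 0] by eventually_elim (simp add: powr_def)
qed

lemma res_monoineq:
  fixes A :: "'a::{real_inner, complete_space} \<Rightarrow> 'a set"
  assumes mm: "maximal_monotone A" and l: "0 < l" and m: "0 < m"
  shows "0 \<le> inner (resolvent A l x - resolvent A m x)
     ((x - resolvent A l x) /\<^sub>R l - (x - resolvent A m x) /\<^sub>R m)"
  using resolvent_char[OF mm l, of x] resolvent_char[OF mm m, of x] mm
  by (simp add: maximal_monotone_def monotone_op_def)

lemma res_pos:
  fixes A :: "'a::{real_inner, complete_space} \<Rightarrow> 'a set"
  assumes mm: "maximal_monotone A" and x: "0 \<notin> A x" and l: "0 < l"
  shows "0 < norm (x - resolvent A l x)"
proof (rule ccontr)
  assume "\<not> ?thesis"
  then have "resolvent A l x = x" by simp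
  then show False using resolvent_char[OF mm l, of x] x by simp
qed

lemma res_lip:
  fixes A :: "'a::{real_inner, complete_space} \<Rightarrow> 'a set"
  assumes mm: "maximal_monotone A" and l: "0 < l" and m: "0 < m"
  shows "norm (resolvent A l x - resolvent A m x) \<le> \<bar>1 - l / m\<bar> * norm (x - resolvent A m x)"
proof -
  define w where "w = resolvent A l x - resolvent A m x"
  define v where "v = x - resolvent A m x"
  have xl: "x - resolvent A l x = v - w" by (simp add: w_def v_def)
  have h0: "0 \<le> inner w ((v - w) /\<^sub>R l - v /\<^sub>R m)"
    using res_monoineq[OF mm l m, of x] by (simp add: xl[symmetric] w_def v_def)
  have id: "inner w ((v - w) /\<^sub>R l - v /\<^sub>R m) = ((1 - l / m) * inner w v - inner w w) / l"
    using l m by (simp add: inner_simps field_simps)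
  have "0 \<le> (1 - l / m) * inner w v - inner w w"
    using h0 l unfolding id by (simp add: zero_le_divide_iff)
  then have "inner w w \<le> (1 - l / m) * inner w v" by simp
  also have "\<dots> \<le> \<bar>1 - l / m\<bar> * \<bar>inner w v\<bar>" by (metis abs_ge_self abs_mult)
  also have "\<dots> \<le> \<bar>1 - l / m\<bar> * (norm w * norm v)"
    by (intro mult_left_mono Cauchy_Schwarz_ineq2) simp
  finally have ww: "norm w * norm w \<le> (\<bar>1 - l / m\<bar> * norm v) * norm w"
    by (simp add: power2_norm_eq_inner[symmetric] power2_eq_square mult.commute mult.left_commute)
  show ?thesis
  proof (cases "norm w = 0")
    case True then show ?thesis by (simp add: w_def)
  next
    case False
    then have "0 < norm w" by simp
    with ww show ?thesis unfolding w_def[symmetric] v_def[symmetric] by (simp add: mult_le_cancel_right)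
  qed
qed

lemma res_mono:
  fixes A :: "'a::{real_inner, complete_space} \<Rightarrow> 'a set"
  assumes mm: "maximal_monotone A" and l: "0 < l" and lm: "l < m"
  shows "norm (x - resolvent A l x) \<le> norm (x - resolvent A m x)"
proof (rule ccontr)
  assume contra: "\<not> ?thesis"
  have m: "0 < m" using l lm by simp
  define p where "p = x - resolvent A l x"
  define q where "q = x - resolvent A m x"
  define P where "P = norm p"
  define Q where "Q = norm q"
  have PQ: "Q < P" using contra by (simp add: P_def Q_def p_def q_def)
  have Q0: "0 \<le> Q" by (simp add: Q_def)
  have h0: "0 \<le> inner (q - p) (p /\<^sub>R l - q /\<^sub>R m)"
    using res_monoineq[OF mm l m, of x] by (simp add: p_def q_def)
  have id: "inner (q - p) (p /\<^sub>R l - q /\<^sub>R m) = ((l + m) * inner p q - l * inner q q - m * inner p p) / (l * m)"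
    using l m by (simp add: inner_simps inner_commute field_simps)
  have "0 \<le> (l + m) * inner p q - l * inner q q - m * inner p p"
  proof -
    let ?X = "(l + m) * inner p q - l * inner q q - m * inner p p"
    have lmp: "0 < l * m" using l m by simp
    have "?X = (?X / (l * m)) * (l * m)" using l m by simp
    also have "0 \<le> (?X / (l * m)) * (l * m)" using h0 lmp l m unfolding id by (intro mult_nonneg_nonneg) auto
    finally show ?thesis by simp
  qed
  moreover have "inner p q \<le> P * Q" unfolding P_def Q_def by (rule norm_cauchy_schwarz)
  moreover have "inner q q = Q * Q" "inner p p = P * P" by (simp_all add: P_def Q_def power2_eq_square[symmetric] power2_norm_eq_inner)
  ultimately have "l * (Q * Q) + m * (P * P) \<le> (l + m) * (P * Q)"
    using l m by (smt (verit) mult_left_mono)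
  then have le: "(P - Q) * (m * P - l * Q) \<le> 0" by (simp add: algebra_simps)
  have "l * Q < m * P"
  proof -
    have "l * Q \<le> l * P" using PQ l by simp
    also have "\<dots> < m * P" using lm PQ Q0 by simp
    finally show ?thesis .
  qed
  then have "0 < (P - Q) * (m * P - l * Q)" using PQ by simp
  then show False using le by simp
qed

theorem proposition2p1:
  fixes A :: "'a::{real_inner, complete_space} \<Rightarrow> 'a set"
    and p :: nat and x :: 'a
  assumes "maximal_monotone A" and "p \<ge> 2" and "0 \<notin> A x"
  shows "continuous_on {0..} (\<lambda>l. phi A p l x)
       \<and> strict_mono_on {0..} (\<lambda>l. phi A p l x)
       \<and> phi A p 0 x = 0
       \<and> filterlim (\<lambda>l. phi A p l x) at_top at_top"
proof -
  note mm = assms(1)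
  define a where "a = 1 / (real p - 1)"
  have p1: "real p - 1 > 0" using assms(2) by simp
  have a0: "0 < a" using p1 by (simp add: a_def)
  define f where "f l = norm (x - resolvent A l x)" for l
  define ph where "ph l = phi A p l x" for l
  have phi_pos: "ph l = l powr a * f l" if "0 < l" for l using that by (simp add: ph_def phi_def a_def f_def)
  have phi_np: "ph l = 0" if "\<not> 0 < l" for l using that by (simp add: ph_def phi_def)
  have fpos: "0 < f l" if "0 < l" for l using res_pos[OF mm assms(3) that] by (simp add: f_def)
  have fmono: "f l \<le> f m" if "0 < l" "l \<le> m" for l m
  proof (cases "l = m")
    case True then show ?thesis by simp
  next
    case False then show ?thesis using res_mono[OF mm that(1), of m x] that by (simp add: f_def)
  qed
  have flip: "\<bar>f t - f l\<bar> \<le> \<bar>1 - t / l\<bar> * f l" if "0 < t" "0 < l" for t l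
  proof -
    have "\<bar>f t - f l\<bar> \<le> norm ((x - resolvent A t x) - (x - resolvent A l x))"
      unfolding f_def by (rule norm_triangle_ineq3)
    also have "\<dots> = norm (resolvent A t x - resolvent A l x)"
      by (metis minus_diff_eq norm_minus_cancel diff_diff_eq2 add_diff_cancel_left' diff_add_cancel
            diff_diff_add diff_diff_eq norm_minus_commute)
    also have "\<dots> \<le> \<bar>1 - t / l\<bar> * f l" unfolding f_def by (rule res_lip[OF mm that])
    finally show ?thesis .
  qed
  have ph_nonneg: "0 \<le> ph l" for l
    by (cases "0 < l") (auto simp: phi_pos phi_np fpos less_imp_le)
  have part1: "strict_mono_on {0..} ph"
    unfolding strict_mono_on_def
  proof (intro allI impI)
    fix r s :: real assume rs: "r \<in> {0..} \<and> s \<in> {0..} \<and> r < s"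
    then have s0: "0 < s" by auto
    show "ph r < ph s"
    proof (cases "0 < r")
      case True
      have "ph r = r powr a * f r" using True phi_pos by blast
      also have "\<dots> < s powr a * f r"
        using rs True a0 fpos[OF True] by (intro mult_strict_right_mono powr_less_mono2) auto
      also have "\<dots> \<le> s powr a * f s"
        using fmono[OF True] rs by (intro mult_left_mono) auto
      also have "\<dots> = ph s" using phi_pos[OF s0] by simp
      finally show ?thesis .
    next
      case False
      then have "ph r = 0" by (rule phi_np)
      also have "0 < s powr a * f s" using s0 fpos[OF s0] by simp
      also have "\<dots> = ph s" using phi_pos[OF s0] by simp
      finally show ?thesis .
    qed
  qed
  have part2: "filterlim ph at_top at_top"
  proof (rule filterlim_at_top_mono)
    show "filterlim (\<lambda>l. f 1 * l powr a) at_top at_top"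
      by (rule filterlim_tendsto_pos_mult_at_top[OF tendsto_const fpos real_powr_at_top'[OF a0]]) simp
    show "\<forall>\<^sub>F l in at_top. f 1 * l powr a \<le> ph l"
      using eventually_ge_at_top[of "1::real"]
    proof eventually_elim
      case (elim l)
      then have "0 < l" by simp
      then show ?case using fmono[of 1 l] elim by (simp add: phi_pos mult.commute mult_left_mono)
    qed
  qed
  have fcont: "isCont f l" if l: "0 < l" for l
  proof -
    have "f \<midarrow>l\<rightarrow> f l"
      unfolding LIM_eq
    proof (intro allI impI)
      fix r :: real assume r: "0 < r"
      define s where "s = min (l/2) (r * l / (f l + 1))"
      have fl0: "0 < f l" using fpos[OF l] .
      have s0: "0 < s" using l r fl0 by (simp add: s_def)
      show "\<exists>s>0. \<forall>t. t \<noteq> l \<and> norm (t - l) < s \<longrightarrow> norm (f t - f l) < r"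
      proof (intro exI[of _ s] conjI allI impI s0)
        fix t assume t: "t \<noteq> l \<and> norm (t - l) < s"
        then have tl: "\<bar>t - l\<bar> < s" by simp
        have "\<bar>t - l\<bar> * 2 < l" using tl by (simp add: s_def)
        then have t0: "0 < t" using l by (smt (verit))
        have "norm (f t - f l) \<le> \<bar>1 - t / l\<bar> * f l" using flip[OF t0 l] by simp
        also have "\<bar>1 - t / l\<bar> = \<bar>t - l\<bar> / l" using l by (simp add: abs_div[symmetric] field_simps abs_minus_commute)
        also have "\<bar>t - l\<bar> / l * f l \<le> s / l * f l"
          using tl l fl0 by (intro mult_right_mono divide_right_mono) auto
        also have "\<dots> \<le> (r * l / (f l + 1)) / l * f l"
          using l fl0 by (intro mult_right_mono divide_right_mono) (auto simp: s_def)
        also have "\<dots> = r * (f l / (f l + 1))"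
        proof -
          have "r * l / (f l + 1) / l = r / (f l + 1)" using l by simp
          then show ?thesis by simp
        qed
        also have "\<dots> < r * 1" using r fl0 by (intro mult_strict_left_mono) auto
        finally show "norm (f t - f l) < r" by simp
      qed
    qed
    then show ?thesis by (simp add: isCont_def)
  qed
  have part3: "continuous_on {0..} ph"
    unfolding continuous_on_eq_continuous_within
  proof (intro ballI)
    fix l :: real assume "l \<in> {0..}"
    show "continuous (at l within {0..}) ph"
    proof (cases "0 < l")
      case True
      have "isCont (\<lambda>t. t powr a * f t) l"
      proof (intro isCont_mult fcont[OF True])
        show "isCont (\<lambda>t. t powr a) l" unfolding isCont_def
          using True by (intro tendsto_powr tendsto_ident_at tendsto_const) auto
      qed
      moreover have "eventually (\<lambda>t. ph t = t powr a * f t) (nhds l)"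
      proof -
        have "eventually (\<lambda>t. t \<in> {0<..}) (nhds l)"
          by (rule eventually_nhds_in_open[OF open_greaterThan]) (use True in simp)
        then show ?thesis by (rule eventually_mono) (simp add: phi_pos)
      qed
      ultimately have "isCont ph l" by (subst isCont_cong) auto
      then show ?thesis by (rule continuous_at_imp_continuous_at_within)
    next
      case False
      then have l0: "l = 0" using \<open>l \<in> {0..}\<close> by simp
      have "(ph \<longlongrightarrow> 0) (at 0 within {0..})"
      proof (rule tendsto_sandwich[of "\<lambda>_. 0" ph _ "\<lambda>t. t powr a * f 1"])
        show "\<forall>\<^sub>F t in at 0 within {0..}. 0 \<le> ph t" by (simp add: ph_nonneg)
        show "\<forall>\<^sub>F t in at 0 within {0..}. ph t \<le> t powr a * f 1"
          unfolding eventually_at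
        proof (intro exI[of _ 1] conjI ballI impI)
          fix t :: real assume t: "t \<in> {0..}" "t \<noteq> 0 \<and> dist t 0 < 1"
          then have t0: "0 < t" "t \<le> 1" by auto
          show "ph t \<le> t powr a * f 1"
            using fmono[OF t0] phi_pos[OF t0(1)] by (simp add: mult_left_mono)
        qed simp
        show "((\<lambda>_. 0::real) \<longlongrightarrow> 0) (at 0 within {0..})" by simp
        have ev: "\<forall>\<^sub>F t in at 0 within {0..}. 0 \<le> (t::real)"
          unfolding eventually_at by (intro exI[of _ 1]) auto
        have "((\<lambda>t. t powr a) \<longlongrightarrow> 0) (at 0 within {0..})"
          by (rule tendsto_zero_powrI[OF tendsto_ident_at tendsto_const ev a0])
        then have "((\<lambda>t. t powr a * f 1) \<longlongrightarrow> 0 * f 1) (at 0 within {0..})"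
          by (intro tendsto_mult tendsto_const)
        then show "((\<lambda>t. t powr a * f 1) \<longlongrightarrow> 0) (at 0 within {0..})" by simp
      qed
      moreover have "ph 0 = 0" by (simp add: phi_np)
      ultimately show ?thesis using l0 by (simp add: continuous_within)
    qed
  qed
  have "ph 0 = 0" by (simp add: phi_np)
  then show ?thesis using part1 part2 part3 unfolding ph_def by simp
qed

end
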